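(* Fix $\epsilon>0$ and $n\in\mathbb{N}$. There is no constant $c$ such that $QK^{\epsilon}(|\sigma\rangle\langle\sigma|)\ge K(\sigma)-c$ for all unit vectors $\sigma\in\mathbb{C}^{2^n}_{alg}$. In particular, it is not the case that $QK^{\epsilon}(|\sigma\rangle\langle\sigma|)$ and $K(\sigma)$ agree up to an additive constant for all unit vectors $\sigma\in\mathbb{C}^{2^n}_{alg}$.
   Context: Let $\mathbb{U}$ be a fixed universal prefix-free Turing machine and $K$ the associated prefix-free Kolmogorov complexity. Finite sets of vectors with complex algebraic entries (and single such vectors) are coded by natural numbers via a fixed canonical effective indexing; for a vector $\sigma$ with complex algebraic entries, $K(\sigma)$ is the prefix-free complexity of its code. $\mathbb{U}(\sigma)\downarrow=F$ means that $\mathbb{U}$ on input $\sigma$ halts and outputs the code of $F$. $\mathbb{C}^{2^n}_{alg}$ denotes the set of vectors in $\mathbb{C}^{2^n}$ all of whose entries are complex algebraic numbers. All logarithms are base 2. For a density matrix $\tau$ on $\mathbb{C}^{2^{n}}$ write $|\tau|=n$. For $\epsilon>0$ define $QK^{\epsilon}(\tau)=\inf\{|\sigma|+\log|F| : \mathbb{U}(\sigma)\downarrow=F,\ F \text{ an orthonormal subset of } \mathbb{C}^{2^{|\tau|}}_{alg},\ \sum_{v\in F}\langle v|\tau|v\rangle>\epsilon\}$, with $\inf\emptyset=\infty$. *)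

theory Defs
  imports "HOL-Computational_Algebra.Polynomial" "HOL-Library.Extended_Real"
begin

datatype recf = Zf | Sf | Proj nat | Comp recf "recf list" | Prec recf recf | Minf recf

inductive eval_recf :: "recf \<Rightarrow> nat list \<Rightarrow> nat \<Rightarrow> bool" where
  ev_zero: "eval_recf Zf xs 0"
| ev_succ: "eval_recf Sf (x # xs) (Suc x)"
| ev_proj: "i < length xs \<Longrightarrow> eval_recf (Proj i) xs (xs ! i)"
| ev_comp: "list_all2 (\<lambda>g y. eval_recf g xs y) gs ys \<Longrightarrow> eval_recf f ys z
            \<Longrightarrow> eval_recf (Comp f gs) xs z"
| ev_prec0: "eval_recf f xs y \<Longrightarrow> eval_recf (Prec f g) (0 # xs) y"
| ev_precS: "eval_recf (Prec f g) (k # xs) y \<Longrightarrow> eval_recf g (k # y # xs) z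
            \<Longrightarrow> eval_recf (Prec f g) (Suc k # xs) z"
| ev_min: "eval_recf f (k # xs) 0 \<Longrightarrow> (\<forall>i<k. \<exists>y. y > 0 \<and> eval_recf f (i # xs) y)
            \<Longrightarrow> eval_recf (Minf f) xs k"

definition partrec :: "(nat \<Rightarrow> nat option) \<Rightarrow> bool" where
  "partrec g \<longleftrightarrow> (\<exists>r. \<forall>x y. eval_recf r [x] y \<longleftrightarrow> g x = Some y)"

text \<open>Standard bijection between binary strings and naturals.\<close>
fun bin_code :: "bool list \<Rightarrow> nat" where
  "bin_code [] = 0"
| "bin_code (b # bs) = 2 * bin_code bs + (if b then 2 else 1)"

definition computable_machine :: "(bool list \<Rightarrow> nat option) \<Rightarrow> bool" where
  "computable_machine M \<longleftrightarrow> (\<exists>g. partrec g \<and> (\<forall>p. M p = g (bin_code p)))"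

definition prefix_free_machine :: "(bool list \<Rightarrow> nat option) \<Rightarrow> bool" where
  "prefix_free_machine M \<longleftrightarrow>
     (\<forall>p q. M p \<noteq> None \<longrightarrow> M q \<noteq> None \<longrightarrow> (\<exists>r. q = p @ r) \<longrightarrow> p = q)"

definition universal_pf_machine :: "(bool list \<Rightarrow> nat option) \<Rightarrow> bool" where
  "universal_pf_machine U \<longleftrightarrow> prefix_free_machine U \<and> computable_machine U \<and>
     (\<forall>M. prefix_free_machine M \<and> computable_machine M \<longrightarrow> (\<exists>\<rho>. \<forall>x. U (\<rho> @ x) = M x))"

definition alg_vec :: "nat \<Rightarrow> complex list \<Rightarrow> bool" where
  "alg_vec n v \<longleftrightarrow> length v = 2 ^ n \<and> (\<forall>x\<in>set v. algebraic x)"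

definition cinner :: "complex list \<Rightarrow> complex list \<Rightarrow> complex" where
  "cinner v w = (\<Sum>i<length v. cnj (v ! i) * w ! i)"

definition orthonormal_set :: "complex list set \<Rightarrow> bool" where
  "orthonormal_set F \<longleftrightarrow> (\<forall>v\<in>F. \<forall>w\<in>F. cinner v w = (if v = w then 1 else 0))"

definition qform :: "(nat \<Rightarrow> nat \<Rightarrow> complex) \<Rightarrow> complex list \<Rightarrow> complex" where
  "qform \<tau> v = (\<Sum>i<length v. \<Sum>j<length v. cnj (v ! i) * \<tau> i j * v ! j)"

definition outer :: "complex list \<Rightarrow> nat \<Rightarrow> nat \<Rightarrow> complex" where
  "outer \<sigma> i j = \<sigma> ! i * cnj (\<sigma> ! j)"

definition Kc :: "(bool list \<Rightarrow> nat option) \<Rightarrow> (complex list \<Rightarrow> nat) \<Rightarrow> complex list \<Rightarrow> ereal" where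
  "Kc U codeV \<sigma> = (INF p\<in>{p. U p = Some (codeV \<sigma>)}. ereal (real (length p)))"

definition QK :: "(bool list \<Rightarrow> nat option) \<Rightarrow> (complex list set \<Rightarrow> nat) \<Rightarrow> real \<Rightarrow> nat
                  \<Rightarrow> (nat \<Rightarrow> nat \<Rightarrow> complex) \<Rightarrow> ereal" where
  "QK U codeF \<epsilon> n \<tau> =
     (INF pF\<in>{(p, F). U p = Some (codeF F) \<and> finite F \<and> F \<subseteq> {v. alg_vec n v}
                     \<and> orthonormal_set F \<and> Re (\<Sum>v\<in>F. qform \<tau> v) > \<epsilon>}.
        ereal (real (length (fst pF)) + log 2 (real (card (snd pF)))))"

end

theory Submission imports Defs begin

fun cst :: "nat \<Rightarrow> recf" where
  "cst 0 = Zf" | "cst (Suc k) = Comp Sf [cst k]"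

inductive_cases ev_ZfE: "eval_recf Zf xs y"
inductive_cases ev_CompE: "eval_recf (Comp f gs) xs y"
inductive_cases ev_SfE: "eval_recf Sf xs y"
inductive_cases ev_ProjE: "eval_recf (Proj i) xs y"
inductive_cases ev_MinfE: "eval_recf (Minf f) xs y"

lemma cst_eval: "eval_recf (cst k) xs y \<longleftrightarrow> y = k"
proof (induction k arbitrary: y)
  case 0
  then show ?case by (auto elim: ev_ZfE intro: eval_recf.intros)
next
  case (Suc k)
  show ?case
  proof
    assume "eval_recf (cst (Suc k)) xs y"
    then obtain ys where "list_all2 (\<lambda>g y. eval_recf g xs y) [cst k] ys" "eval_recf Sf ys y"
      by (auto elim: ev_CompE)
    then show "y = Suc k" using Suc.IH by (auto elim!: ev_SfE simp: list_all2_Cons1)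
  next
    assume "y = Suc k"
    have "list_all2 (\<lambda>g y. eval_recf g xs y) [cst k] [k]" using Suc.IH by simp
    moreover have "eval_recf Sf [k] (Suc k)" by (rule ev_succ)
    ultimately show "eval_recf (cst (Suc k)) xs y" using \<open>y = Suc k\<close> by (auto intro: ev_comp)
  qed
qed

lemma d_eval: "eval_recf (Minf (Proj 1)) [x] y \<longleftrightarrow> x = 0 \<and> y = 0"
proof
  assume h: "eval_recf (Minf (Proj 1)) [x] y"
  then have a: "eval_recf (Proj 1) [y, x] 0" and b: "\<forall>i<y. \<exists>z. z > 0 \<and> eval_recf (Proj 1) [i, x] z"
    by (auto elim: ev_MinfE)
  from a have "x = 0" by (auto elim: ev_ProjE)
  moreover have "y = 0"
  proof (rule ccontr)
    assume "y \<noteq> 0"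
    then obtain z where "z > 0" "eval_recf (Proj 1) [0, x] z" using b by auto
    then show False using \<open>x = 0\<close> by (auto elim: ev_ProjE)
  qed
  ultimately show "x = 0 \<and> y = 0" by simp
next
  assume "x = 0 \<and> y = 0"
  then show "eval_recf (Minf (Proj 1)) [x] y"
    using ev_min[of "Proj 1" 0 "[0]"] ev_proj[of 1 "[0,0::nat]"] by simp
qed

lemma r_eval: "eval_recf (Comp (cst k) [Minf (Proj 1)]) [x] y \<longleftrightarrow> x = 0 \<and> y = k"
proof
  assume "eval_recf (Comp (cst k) [Minf (Proj 1)]) [x] y"
  then obtain ys where "list_all2 (\<lambda>g y. eval_recf g [x] y) [Minf (Proj 1)] ys" "eval_recf (cst k) ys y"
    by (auto elim: ev_CompE)
  then show "x = 0 \<and> y = k" using d_eval cst_eval by (auto simp: list_all2_Cons1)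
next
  assume "x = 0 \<and> y = k"
  then show "eval_recf (Comp (cst k) [Minf (Proj 1)]) [x] y"
    using d_eval[of 0 0] by (auto intro!: ev_comp[where ys="[0]"] simp: cst_eval)
qed

lemma bin_code_0: "bin_code p = 0 \<longleftrightarrow> p = []"
  by (cases p) auto

lemma U_const:
  assumes "universal_pf_machine U"
  shows "\<exists>p. U p = Some k"
proof -
  define g where "g = (\<lambda>x::nat. if x = 0 then Some k else None)"
  define M where "M = (\<lambda>p. g (bin_code p))"
  have "\<forall>x y. eval_recf (Comp (cst k) [Minf (Proj 1)]) [x] y \<longleftrightarrow> g x = Some y"
    using r_eval[of k] unfolding g_def by auto
  then have "partrec g" unfolding partrec_def by blast
  then have "computable_machine M" unfolding computable_machine_def M_def by auto
  moreover have "prefix_free_machine M"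
    unfolding prefix_free_machine_def M_def g_def by (auto simp: bin_code_0 split: if_splits)
  ultimately obtain \<rho> where "\<forall>x. U (\<rho> @ x) = M x" using assms unfolding universal_pf_machine_def by blast
  then have "U (\<rho> @ []) = Some k" by (simp only: M_def g_def bin_code.simps) simp
  then show ?thesis by blast
qed



definition zt :: "nat \<Rightarrow> complex" where
  "zt t = (of_nat t + \<i>) / (of_nat t - \<i>)"

lemma nz1: "(of_nat t::complex) - \<i> \<noteq> 0" by (simp add: complex_eq_iff)
lemma nz2: "(of_nat t::complex) + \<i> \<noteq> 0" by (simp add: complex_eq_iff)

lemma zt_inj: "inj zt"
proof (rule injI)
  fix s t assume "zt s = zt t"
  then have "(of_nat s + \<i>) * (of_nat t - \<i>) = (of_nat t + \<i>) * (of_nat s - (\<i>::complex))"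
    using nz1 nz2 unfolding zt_def by (simp add: field_simps)
  then show "s = t" by (simp add: complex_eq_iff algebra_simps)
qed

lemma zt_unit: "cnj (zt t) * zt t = 1"
proof -
  have "cnj (zt t) = (of_nat t - \<i>) / (of_nat t + \<i>)" unfolding zt_def by simp
  then show ?thesis using nz1[of t] nz2[of t] unfolding zt_def by simp
qed

lemma zt_alg: "algebraic (zt t)"
proof (rule algebraicI[of "[:of_nat (t^2+1), - 2 * (of_nat (t^2) - 1), of_nat (t^2+1):]"])
  fix i show "coeff [:of_nat (t^2+1), - 2 * (of_nat (t^2) - 1), of_nat (t^2+1):] i \<in> \<int>"
    by (cases i; cases "i - 1"; cases "i - 2") (auto simp: coeff_pCons split: nat.splits)
next
  show "[:of_nat (t^2+1), - 2 * (of_nat (t^2) - 1), of_nat (t^2+1::nat):] \<noteq> (0::complex poly)" by simp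
next
  show "poly [:of_nat (t^2+1), - 2 * (of_nat (t^2) - 1), of_nat (t^2+1):] (zt t) = 0"
  proof -
    let ?a = "of_nat (t^2+1) :: complex" and ?b = "- 2 * (of_nat (t^2) - 1) :: complex"
    let ?u = "of_nat t + \<i> :: complex" and ?w = "of_nat t - \<i> :: complex"
    have e: "?a*?u^2 + ?b*?u*?w + ?a*?w^2 = 0"
      by (simp add: algebra_simps power2_eq_square complex_eq_iff)
    have g: "\<And>a b u w::complex. w \<noteq> 0 \<Longrightarrow> poly [:a, b, a:] (u/w) = (a*u^2 + b*u*w + a*w^2) / w^2"
      by (simp add: field_simps power2_eq_square)
    have "poly [:?a, ?b, ?a:] (zt t) = (?a*?u^2 + ?b*?u*?w + ?a*?w^2) / ?w^2"
      using g[OF nz1[of t]] unfolding zt_def by blast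
    then show ?thesis using e by simp
  qed
qed



definition sig :: "nat \<Rightarrow> nat \<Rightarrow> complex list" where
  "sig n t = zt t # replicate (2^n - 1) 0"

lemma sig_alg: "alg_vec n (sig n t)"
  unfolding alg_vec_def sig_def using zt_alg[of t] by auto

lemma sig_unit: "cinner (sig n t) (sig n t) = 1"
proof -
  obtain m where m: "2^n - 1 = (m::nat)" by blast
  have "(2::nat)^n = Suc m" using m by (metis Suc_pred' zero_less_numeral zero_less_power)
  then show ?thesis unfolding cinner_def sig_def m
    by (simp add: sum.lessThan_Suc_shift zt_unit del: sum.lessThan_Suc)
qed

lemma sig_inj: "inj (sig n)"
  using zt_inj unfolding sig_def inj_def by auto

definition ev :: "nat \<Rightarrow> nat \<Rightarrow> complex list" where
  "ev n i = map (\<lambda>j. if j = i then 1 else 0) [0..<2^n]"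

lemma ev_nth: "j < 2^n \<Longrightarrow> ev n i ! j = (if j = i then 1 else 0)"
  unfolding ev_def by simp

lemma ev_len[simp]: "length (ev n i) = 2^n" unfolding ev_def by simp

lemma ev_inner: assumes "i < 2^n" "j < 2^n" shows " cinner (ev n i) (ev n j) = (if i = j then 1 else 0)"
proof -
  have "\<And>l. l \<in> {..<2^n} \<Longrightarrow> cnj (ev n i ! l) * ev n j ! l = (if l = i then (if i = j then 1 else 0) else 0)"
    by (simp add: ev_nth)
  then have "cinner (ev n i) (ev n j) = (\<Sum>l<2^n. if l = i then (if i = j then 1 else 0) else 0)"
    unfolding cinner_def ev_len by (intro sum.cong refl) auto
  also have "\<dots> = (if i = j then 1 else 0)" using assms by (simp add: sum.delta)
  finally show ?thesis .
qed

lemma ev_inj: "inj_on (ev n) {..<2^n}"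
proof (rule inj_onI)
  fix i j assume "i \<in> {..<2^n}" "j \<in> {..<2^n}" "ev n i = ev n j"
  then show "i = j" using ev_nth[of i n i] ev_nth[of i n j] by (auto split: if_splits)
qed

lemma ev_qform: assumes "i < 2^n" "length \<sigma> = 2^n" shows " qform (outer \<sigma>) (ev n i) = \<sigma> ! i * cnj (\<sigma> ! i)"
proof -
  have "\<And>a b. a \<in> {..<2^n} \<Longrightarrow> b \<in> {..<2^n} \<Longrightarrow> cnj (ev n i ! a) * (\<sigma> ! a * cnj (\<sigma> ! b)) * ev n i ! b
     = (if a = i then (if b = i then \<sigma> ! i * cnj (\<sigma> ! i) else 0) else 0)"
    by (simp add: ev_nth)
  then have "qform (outer \<sigma>) (ev n i) = (\<Sum>a<2^n. \<Sum>b<2^n. if a = i then (if b = i then \<sigma> ! i * cnj (\<sigma> ! i) else 0) else 0)"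
    unfolding qform_def outer_def ev_len by (intro sum.cong refl) auto
  also have "\<dots> = (\<Sum>a<2^n. if a = i then \<sigma> ! i * cnj (\<sigma> ! i) else 0)"
    using assms by (intro sum.cong refl) simp
  also have "\<dots> = \<sigma> ! i * cnj (\<sigma> ! i)" using assms by simp
  finally show ?thesis .
qed

lemma F0_props:
  assumes "alg_vec n \<sigma>" "cinner \<sigma> \<sigma> = 1"
  shows "finite (ev n ` {..<2^n}) \<and> ev n ` {..<2^n} \<subseteq> {v. alg_vec n v}
     \<and> orthonormal_set (ev n ` {..<2^n}) \<and> Re (\<Sum>v\<in>ev n ` {..<2^n}. qform (outer \<sigma>) v) = 1"
proof -
  have l: "length \<sigma> = 2^n" using assms(1) unfolding alg_vec_def by simp
  have "(\<Sum>v\<in>ev n ` {..<2^n}. qform (outer \<sigma>) v) = (\<Sum>i<2^n. qform (outer \<sigma>) (ev n i))"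
    by (rule sum.reindex[OF ev_inj, unfolded comp_def])
  also have "\<dots> = (\<Sum>i<2^n. \<sigma> ! i * cnj (\<sigma> ! i))" using ev_qform l by simp
  also have "\<dots> = cinner \<sigma> \<sigma>" unfolding cinner_def l by (simp add: mult.commute)
  finally have s: "(\<Sum>v\<in>ev n ` {..<2^n}. qform (outer \<sigma>) v) = 1" using assms(2) by simp
  have a: "ev n ` {..<2^n} \<subseteq> {v. alg_vec n v}"
    unfolding alg_vec_def ev_def by auto
  have o: "orthonormal_set (ev n ` {..<2^n})"
    unfolding orthonormal_set_def using ev_inner ev_inj[of n] by (auto simp: inj_on_def)
  show ?thesis using s a o by simp
qed



lemma QK_bound:
  assumes U: "universal_pf_machine U" and eps: "\<epsilon> < 1"
  shows "\<exists>B. \<forall>\<sigma>. alg_vec n \<sigma> \<and> cinner \<sigma> \<sigma> = 1 \<longrightarrow> QK U codeF \<epsilon> n (outer \<sigma>) \<le> ereal B"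
proof -
  define F0 where "F0 = ev n ` {..<2^n}"
  obtain p0 where p0: "U p0 = Some (codeF F0)" using U_const[OF U] by blast
  show ?thesis
  proof (intro exI allI impI)
    fix \<sigma> assume h: "alg_vec n \<sigma> \<and> cinner \<sigma> \<sigma> = 1"
    then have "(p0, F0) \<in> {(p, F). U p = Some (codeF F) \<and> finite F \<and> F \<subseteq> {v. alg_vec n v}
                     \<and> orthonormal_set F \<and> Re (\<Sum>v\<in>F. qform (outer \<sigma>) v) > \<epsilon>}"
      using F0_props[of n \<sigma>] p0 eps unfolding F0_def by auto
    then show "QK U codeF \<epsilon> n (outer \<sigma>) \<le> ereal (real (length p0) + log 2 (real (card F0)))"
      unfolding QK_def by (rule INF_lower2) simp
  qed
qed

lemma Kc_small:
  assumes "Kc U codeV \<sigma> \<le> ereal R"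
  shows "\<exists>p. U p = Some (codeV \<sigma>) \<and> length p \<le> nat \<lfloor>R\<rfloor>"
proof (rule ccontr)
  assume "\<not> ?thesis"
  then have "\<forall>p. U p = Some (codeV \<sigma>) \<longrightarrow> length p \<ge> Suc (nat \<lfloor>R\<rfloor>)" by auto
  then have "ereal (real (Suc (nat \<lfloor>R\<rfloor>))) \<le> Kc U codeV \<sigma>"
    unfolding Kc_def by (intro INF_greatest) auto
  moreover have "R < real (Suc (nat \<lfloor>R\<rfloor>))" by linarith
  ultimately show False using assms by (metis ereal_less_eq(3) leD order_trans)
qed

lemma Kc_unbounded:
  assumes codeV: "inj_on codeV {v. \<forall>x\<in>set v. algebraic x}"
  shows "\<not> (\<forall>t. Kc U codeV (sig n t) \<le> ereal R)"
proof
  assume h: "\<forall>t. Kc U codeV (sig n t) \<le> ereal R"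
  define N where "N = nat \<lfloor>R\<rfloor>"
  define P where "P = {p::bool list. set p \<subseteq> UNIV \<and> length p \<le> N}"
  have fP: "finite P" unfolding P_def by (rule finite_lists_length_le) simp
  have sub: "range (\<lambda>t. codeV (sig n t)) \<subseteq> (\<lambda>p. the (U p)) ` P"
  proof
    fix y assume "y \<in> range (\<lambda>t. codeV (sig n t))"
    then obtain t where y: "y = codeV (sig n t)" by blast
    obtain p where "U p = Some (codeV (sig n t))" "length p \<le> N"
      using Kc_small[OF h[rule_format, of t]] unfolding N_def by blast
    then show "y \<in> (\<lambda>p. the (U p)) ` P" unfolding P_def y by force
  qed
  have inj: "inj (\<lambda>t. codeV (sig n t))"
  proof (rule injI)
    fix s t assume "codeV (sig n s) = codeV (sig n t)"
    then have "sig n s = sig n t"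
      using codeV sig_alg[of n s] sig_alg[of n t] unfolding alg_vec_def inj_on_def by blast
    then show "s = t" using sig_inj[of n] by (simp add: inj_def)
  qed
  have "finite (range (\<lambda>t. codeV (sig n t)))" using sub fP finite_subset by blast
  then have "finite (UNIV :: nat set)" using inj finite_imageD by blast
  then show False by simp
qed

lemma ereal_aux1: "a - ereal c \<le> ereal B \<Longrightarrow> a \<le> ereal (B + c)"
  by (cases a) auto
lemma ereal_aux2: "a \<le> q + ereal c \<Longrightarrow> q \<le> ereal B \<Longrightarrow> a \<le> ereal (B + c)"
  by (metis add_right_mono order_trans plus_ereal.simps(1))

theorem mainTheorem6:
  fixes U :: "bool list \<Rightarrow> nat option"
    and codeV :: "complex list \<Rightarrow> nat"
    and codeF :: "complex list set \<Rightarrow> nat"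
    and \<epsilon> :: real and n :: nat
  assumes U: "universal_pf_machine U"
    and codeV: "inj_on codeV {v. \<forall>x\<in>set v. algebraic x}"
    and codeF: "inj_on codeF {F. finite F \<and> (\<forall>v\<in>F. \<forall>x\<in>set v. algebraic x)}"
    and eps: "0 < \<epsilon>" "\<epsilon> < 1"
  shows "\<not> (\<exists>c::real. \<forall>\<sigma>. alg_vec n \<sigma> \<and> cinner \<sigma> \<sigma> = 1 \<longrightarrow>
             QK U codeF \<epsilon> n (outer \<sigma>) \<ge> Kc U codeV \<sigma> - ereal c)
         \<and> \<not> (\<exists>c::real. \<forall>\<sigma>. alg_vec n \<sigma> \<and> cinner \<sigma> \<sigma> = 1 \<longrightarrow>
             QK U codeF \<epsilon> n (outer \<sigma>) \<le> Kc U codeV \<sigma> + ereal c \<and>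
             Kc U codeV \<sigma> \<le> QK U codeF \<epsilon> n (outer \<sigma>) + ereal c)"
proof -
  obtain B where B: "\<And>\<sigma>. alg_vec n \<sigma> \<and> cinner \<sigma> \<sigma> = 1 \<Longrightarrow> QK U codeF \<epsilon> n (outer \<sigma>) \<le> ereal B"
    using QK_bound[OF U eps(2), of n codeF] by blast
  have sg: "\<And>t. alg_vec n (sig n t) \<and> cinner (sig n t) (sig n t) = 1"
    using sig_alg sig_unit by blast
  show ?thesis
  proof (intro conjI notI)
    assume "\<exists>c::real. \<forall>\<sigma>. alg_vec n \<sigma> \<and> cinner \<sigma> \<sigma> = 1 \<longrightarrow>
             QK U codeF \<epsilon> n (outer \<sigma>) \<ge> Kc U codeV \<sigma> - ereal c"
    then obtain c where c: "\<forall>\<sigma>. alg_vec n \<sigma> \<and> cinner \<sigma> \<sigma> = 1 \<longrightarrow>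
             QK U codeF \<epsilon> n (outer \<sigma>) \<ge> Kc U codeV \<sigma> - ereal c" by blast
    have "\<forall>t. Kc U codeV (sig n t) \<le> ereal (B + c)"
      using c sg B by (meson ereal_aux1 order_trans)
    then show False using Kc_unbounded[OF codeV] by blast
  next
    assume "\<exists>c::real. \<forall>\<sigma>. alg_vec n \<sigma> \<and> cinner \<sigma> \<sigma> = 1 \<longrightarrow>
             QK U codeF \<epsilon> n (outer \<sigma>) \<le> Kc U codeV \<sigma> + ereal c \<and>
             Kc U codeV \<sigma> \<le> QK U codeF \<epsilon> n (outer \<sigma>) + ereal c"
    then obtain c where c: "\<forall>\<sigma>. alg_vec n \<sigma> \<and> cinner \<sigma> \<sigma> = 1 \<longrightarrow>
             Kc U codeV \<sigma> \<le> QK U codeF \<epsilon> n (outer \<sigma>) + ereal c" by blast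
    have "\<forall>t. Kc U codeV (sig n t) \<le> ereal (B + c)"
      using c sg B by (meson ereal_aux2)
    then show False using Kc_unbounded[OF codeV] by blast
  qed
qed


end
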